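(* Let $f\in C([t_+,\infty)\times \mathbb{R}^n,\mathbb{R}^m)$ have a partial derivative $\frac{\partial f}{\partial x}\in C([t_+,\infty)\times \mathbb{R}^n, \mathrm{L}(\mathbb{R}^n,\mathbb{R}^m))$, and suppose that for every fixed $t_*$, $x_*=x_{s_1}^*+x_{s_2}^*+x_{p_1}^*+x_{p_2}^*$ with $(t_*,x_* )\in L_{t_+}$ and $x_{s_2}^*\in D_{s_2}$ the operator $\Phi_{t_*,x_*}=\left[\frac{\partial Q_2f}{\partial x}(t_*,x_* )- B\right] P_2\colon X_2\to Y_2$ is invertible. Then: (i) $f$ satisfies locally a Lipschitz condition with respect to $x$ on $[t_+,\infty)\times\mathbb{R}^n$; and (ii) for every such $(t_*,x_* )$ there exist a neighborhood $U_\delta(t_*,x_{s_1}^*,x_{s_2}^*,x_{p_1}^* )=U_{\delta_1}(t_* )\times U_{\delta_2}(x_{s_1}^* )\times U_{\delta_3}(x_{s_2}^* )\times U_{\delta_4}(x_{p_1}^* )$ (where $U_{\delta_3}(x_{s_2}^* )\subseteq D_{s_2}$ may be closed), a neighborhood $U_\varepsilon(x_{p_2}^* )$ and an invertible operator $\Phi_{t_*,x_*}\in\mathrm{L}(X_2,Y_2)$ (namely the operator above) such that for all $(t,x_{s_1},x_{s_2},x_{p_1})\in U_\delta(t_*,x_{s_1}^*,x_{s_2}^*,x_{p_1}^* )$ and $x_{p_2}^1,x_{p_2}^2\in U_\varepsilon(x_{p_2}^* )$ the mapping $\widetilde{\Psi}(t,x_{s_1},x_{s_2},x_{p_1},x_{p_2}):=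 Q_2f(t,x_{s_1}+x_{s_2}+x_{p_1}+x_{p_2})-B\big|_{X_2}x_{p_2}$ satisfies $\|\widetilde{\Psi}(t,x_{s_1},x_{s_2},x_{p_1},x_{p_2}^1)- \widetilde{\Psi}(t,x_{s_1},x_{s_2},x_{p_1},x_{p_2}^2)-\Phi_{t_*,x_*} [x_{p_2}^1-x_{p_2}^2]\|\le c\|x_{p_2}^1-x_{p_2}^2\|$ with $c=c(\delta,\varepsilon)$ satisfying $\lim_{\delta,\varepsilon\to 0} c(\delta,\varepsilon)<\|\Phi_{t_*,x_*}^{-1}\|^{-1}$. Consequently, whenever the hypotheses of the global-solvability theorem with the differentiability/invertibility assumption hold, the hypotheses of the global-solvability theorem with the local-Lipschitz/contraction assumption (ii) also hold, since all their remaining hypotheses coincide.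
   Context: Consider the DAE $\frac{d}{dt}[Ax]+Bx=f(t,x)$, $t\in[t_+,\infty)$, $x\in\mathbb{R}^n$, with $A,B\in\mathrm{L}(\mathbb{R}^n,\mathbb{R}^m)$ forming a singular pencil $\lambda A+B$ whose regular block has index at most 1. There are direct decompositions $\mathbb{R}^n=X_{s_1}\dot+X_{s_2}\dot+X_1\dot+X_2$, $\mathbb{R}^m=Y_{s_1}\dot+Y_{s_2}\dot+Y_1\dot+Y_2$ with corresponding projectors $S_i\colon\mathbb{R}^n\to X_{s_i}$, $P_i\colon\mathbb{R}^n\to X_i$, $F_i\colon\mathbb{R}^m\to Y_{s_i}$, $Q_i\colon\mathbb{R}^m\to Y_i$ ($i=1,2$), and every $x\in\mathbb{R}^n$ is written $x=x_{s_1}+x_{s_2}+x_{p_1}+x_{p_2}$ with $x_{s_i}=S_ix$, $x_{p_i}=P_ix$. $L_{t_+}=\{(t,x)\in[t_+,\infty)\times\mathbb{R}^n\mid (F_2+Q_2)[Bx-f(t,x)]=0\}$, and $D_{s_2}\subset X_{s_2}$ is a given set. The two global-solvability theorems share the remaining hypotheses (unique solvability of the constraint for $x_{p_2}$ and the Lyapunov-type function condition) and differ only in the hypothesis given in the claim as the assumption versus (ii). *)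

theory Defs
  imports "HOL-Analysis.Analysis"
begin

definition proj_decomp4 :: "('a::real_vector \<Rightarrow> 'a) \<Rightarrow> ('a \<Rightarrow> 'a) \<Rightarrow> ('a \<Rightarrow> 'a) \<Rightarrow> ('a \<Rightarrow> 'a) \<Rightarrow> bool" where
  "proj_decomp4 R1 R2 R3 R4 \<longleftrightarrow>
     (\<forall>R\<in>{R1, R2, R3, R4}. linear R \<and> R \<circ> R = R) \<and>
     (\<forall>x. R1 x + R2 x + R3 x + R4 x = x) \<and>
     R1 \<circ> R2 = (\<lambda>_. 0) \<and> R1 \<circ> R3 = (\<lambda>_. 0) \<and> R1 \<circ> R4 = (\<lambda>_. 0) \<and>
     R2 \<circ> R1 = (\<lambda>_. 0) \<and> R2 \<circ> R3 = (\<lambda>_. 0) \<and> R2 \<circ> R4 = (\<lambda>_. 0) \<and>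
     R3 \<circ> R1 = (\<lambda>_. 0) \<and> R3 \<circ> R2 = (\<lambda>_. 0) \<and> R3 \<circ> R4 = (\<lambda>_. 0) \<and>
     R4 \<circ> R1 = (\<lambda>_. 0) \<and> R4 \<circ> R2 = (\<lambda>_. 0) \<and> R4 \<circ> R3 = (\<lambda>_. 0)"

definition L_set :: "real \<Rightarrow> ('n \<Rightarrow> 'm::real_vector) \<Rightarrow> ('m \<Rightarrow> 'm) \<Rightarrow> ('m \<Rightarrow> 'm)
    \<Rightarrow> (real \<Rightarrow> 'n \<Rightarrow> 'm) \<Rightarrow> (real \<times> 'n) set" where
  "L_set tp B F2 Q2 f = {(t, x). tp \<le> t \<and> F2 (B x - f t x) + Q2 (B x - f t x) = 0}"

text \<open>The operator Phi = [d(Q2 f)/dx (t*,x*) - B] P2, acting on X2 = range P2;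
  D is the partial derivative df/dx(t*,x*).\<close>
definition Phi_op :: "('m::real_vector \<Rightarrow> 'm) \<Rightarrow> ('n \<Rightarrow> 'm) \<Rightarrow> ('n \<Rightarrow> 'm) \<Rightarrow> 'n \<Rightarrow> 'm" where
  "Phi_op Q2 B D = (\<lambda>y. Q2 (D y) - B y)"

definition opnorm_on :: "'a::real_normed_vector set \<Rightarrow> ('a \<Rightarrow> 'b::real_normed_vector) \<Rightarrow> real" where
  "opnorm_on V g = Sup ({0} \<union> {norm (g v) / norm v | v. v \<in> V \<and> v \<noteq> 0})"

end

theory Submission
  imports Defs
begin

lemma dist_pair_le: "dist (a, b) (c, d) \<le> dist a c + dist b d"
proof -
  have "dist (a, b) (c, d) = sqrt ((dist a c)\<^sup>2 + (dist b d)\<^sup>2)" by (simp add: dist_Pair_Pair)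
  also have "\<dots> \<le> sqrt ((dist a c + dist b d)\<^sup>2)"
    by (rule real_sqrt_le_mono) (simp add: power2_eq_square algebra_simps)
  also have "\<dots> = dist a c + dist b d" by simp
  finally show ?thesis .
qed

lemma H1:
  fixes g :: "real \<times> 'a::euclidean_space \<Rightarrow> 'b::real_normed_vector"
  assumes "continuous_on ({tp..} \<times> UNIV) g"
  shows "bdd_above ((\<lambda>p. norm (g p)) ` (({tp..} \<inter> cball t d) \<times> cball x r))"
proof -
  have K: "compact (({tp..} \<inter> cball t d) \<times> cball x r)"
    by (intro compact_Times closed_Int_compact) auto
  have "continuous_on (({tp..} \<inter> cball t d) \<times> cball x r) (\<lambda>p. norm (g p))"
    by (intro continuous_intros continuous_on_subset[OF assms]) auto
  from compact_continuous_image[OF this K] show ?thesis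
    by (intro bounded_imp_bdd_above compact_imp_bounded)
qed

lemma H2:
  fixes f :: "real \<Rightarrow> 'a::real_normed_vector \<Rightarrow> 'b::real_normed_vector"
  assumes fd: "\<And>z. (f s has_derivative blinfun_apply (f' z)) (at z)"
    and cS: "convex S" and a: "a \<in> S" and b: "b \<in> S"
    and Bd: "\<And>z. z \<in> S \<Longrightarrow> norm (f' z - K) \<le> M"
  shows "norm (f s a - f s b - blinfun_apply K (a - b)) \<le> M * norm (a - b)"
proof -
  define g where "g z = f s z - blinfun_apply K z" for z
  have "(g has_derivative blinfun_apply (f' z - K)) (at z within S)" for z
  proof -
    have "(g has_derivative (\<lambda>h. blinfun_apply (f' z) h - blinfun_apply K h)) (at z)"
      unfolding g_def
      by (intro has_derivative_diff fd bounded_linear_imp_has_derivative blinfun.bounded_linear_right)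
    moreover have "blinfun_apply (f' z - K) = (\<lambda>h. blinfun_apply (f' z) h - blinfun_apply K h)"
      by (rule ext) (simp add: blinfun.diff_left)
    ultimately show ?thesis
      by (metis has_derivative_at_withinI)
  qed
  from differentiable_bound[OF cS this _ a b, of M] Bd
  have "norm (g a - g b) \<le> M * norm (a - b)" by (simp add: norm_blinfun.rep_eq[symmetric])
  then show ?thesis by (simp add: g_def blinfun.diff_right algebra_simps)
qed

lemma norm4: "norm ((u::'a::real_normed_vector) + v + w + q) \<le> norm u + norm v + norm w + norm q"
proof -
  have "norm (u + v + w + q) \<le> norm (u + v + w) + norm q" by (rule norm_triangle_ineq)
  moreover have "norm (u + v + w) \<le> norm (u + v) + norm w" by (rule norm_triangle_ineq)
  moreover have "norm (u + v) \<le> norm u + norm v" by (rule norm_triangle_ineq)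
  ultimately show ?thesis by linarith
qed

theorem corollary1:
  fixes A B :: "real^'n \<Rightarrow> real^'m"
    and S1 S2 P1 P2 :: "real^'n \<Rightarrow> real^'n"
    and F1 F2 Q1 Q2 :: "real^'m \<Rightarrow> real^'m"
    and f :: "real \<Rightarrow> real^'n \<Rightarrow> real^'m"
    and f' :: "real \<Rightarrow> real^'n \<Rightarrow> ((real^'n) \<Rightarrow>\<^sub>L (real^'m))"
    and tp :: real
    and Ds2 :: "(real^'n) set"
  assumes linA: "linear A" and linB: "linear B"
    and decX: "proj_decomp4 S1 S2 P1 P2"
    and decY: "proj_decomp4 F1 F2 Q1 Q2"
    and Ds2_sub: "Ds2 \<subseteq> range S2"
    and f_cont: "continuous_on ({tp..} \<times> UNIV) (\<lambda>(t, x). f t x)"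
    and f_deriv: "\<And>t x. tp \<le> t \<Longrightarrow> (f t has_derivative blinfun_apply (f' t x)) (at x)"
    and f'_cont: "continuous_on ({tp..} \<times> UNIV) (\<lambda>(t, x). f' t x)"
    and Phi_inv: "\<And>t x. (t, x) \<in> L_set tp B F2 Q2 f \<Longrightarrow> S2 x \<in> Ds2 \<Longrightarrow>
         bij_betw (Phi_op Q2 B (blinfun_apply (f' t x))) (range P2) (range Q2)"
  shows "local_lipschitz {tp..} UNIV f \<and>
    (\<forall>t x. (t, x) \<in> L_set tp B F2 Q2 f \<and> S2 x \<in> Ds2 \<longrightarrow>
      (let Phi = Phi_op Q2 B (blinfun_apply (f' t x));
           Psi = (\<lambda>s xs1 xs2 xp1 xp2. Q2 (f s (xs1 + xs2 + xp1 + xp2)) - B xp2)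
       in \<exists>\<delta>0>0. \<exists>\<epsilon>0>0. \<exists>c :: real \<Rightarrow> real \<Rightarrow> real \<Rightarrow> real \<Rightarrow> real \<Rightarrow> real.
          (\<forall>d1 d2 d3 d4 e. 0 < d1 \<and> d1 \<le> \<delta>0 \<and> 0 < d2 \<and> d2 \<le> \<delta>0 \<and> 0 < d3 \<and> d3 \<le> \<delta>0 \<and>
               0 < d4 \<and> d4 \<le> \<delta>0 \<and> 0 < e \<and> e \<le> \<epsilon>0 \<longrightarrow>
             (\<forall>s xs1 xs2 xp1 y1 y2.
                s \<in> {tp..} \<inter> cball t d1 \<and>
                xs1 \<in> range S1 \<inter> cball (S1 x) d2 \<and>
                xs2 \<in> Ds2 \<inter> cball (S2 x) d3 \<and>
                xp1 \<in> range P1 \<inter> cball (P1 x) d4 \<and>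
                y1 \<in> range P2 \<inter> cball (P2 x) e \<and>
                y2 \<in> range P2 \<inter> cball (P2 x) e \<longrightarrow>
                norm (Psi s xs1 xs2 xp1 y1 - Psi s xs1 xs2 xp1 y2 - Phi (y1 - y2))
                  \<le> c d1 d2 d3 d4 e * norm (y1 - y2))) \<and>
          (\<exists>L. ((\<lambda>(d1, d2, d3, d4, e). c d1 d2 d3 d4 e) \<longlongrightarrow> L)
                 (at_right 0 \<times>\<^sub>F (at_right 0 \<times>\<^sub>F (at_right 0 \<times>\<^sub>F (at_right 0 \<times>\<^sub>F at_right 0)))) \<and>
               L * opnorm_on (range Q2) (the_inv_into (range P2) Phi) < 1)))"
proof -
  have linS1: "linear S1" and linS2: "linear S2" and linP1: "linear P1" and linP2: "linear P2"
    and xdec: "\<And>x. S1 x + S2 x + P1 x + P2 x = x"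
    using decX unfolding proj_decomp4_def by auto
  have linQ2: "linear Q2" using decY unfolding proj_decomp4_def by auto
  have blQ2: "bounded_linear Q2" using linQ2 by (simp add: linear_conv_bounded_linear)
  have fcont2: "continuous_on ({tp..} \<times> UNIV) (\<lambda>p. (case p of (s, z) \<Rightarrow> f' s z) - K)" for K
    by (intro continuous_intros f'_cont)
  have part1: "local_lipschitz {tp..} UNIV f"
  proof (rule local_lipschitzI)
    fix t :: real and x :: "real^'n"
    assume t: "t \<in> {tp..}" and "x \<in> UNIV"
    define Sx where "Sx = (\<lambda>p. norm ((case p of (s, z) \<Rightarrow> f' s z) - 0)) ` (({tp..} \<inter> cball t 1) \<times> cball x 1)"
    define M where "M = Sup Sx"
    have bdd: "bdd_above Sx" unfolding Sx_def by (rule H1[OF fcont2])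
    have Mb: "norm (f' s z - 0) \<le> M" if "s \<in> {tp..} \<inter> cball t 1" "z \<in> cball x 1" for s z
      unfolding M_def by (rule cSup_upper[OF _ bdd]) (use that in \<open>force simp: Sx_def\<close>)
    have M0: "0 \<le> M" using Mb[of t x] t by (auto intro: order_trans[OF norm_ge_zero])
    show "\<exists>u>0. \<exists>L. \<forall>s\<in>cball t u \<inter> {tp..}. L-lipschitz_on (cball x u \<inter> UNIV) (f s)"
    proof (rule exI[of _ "1::real"], intro conjI zero_less_one exI[of _ M] ballI)
      fix s assume s: "s \<in> cball t 1 \<inter> {tp..}"
      show "M-lipschitz_on (cball x 1 \<inter> UNIV) (f s)"
      proof (rule lipschitz_onI)
        fix a b assume a: "a \<in> cball x 1 \<inter> UNIV" and b: "b \<in> cball x 1 \<inter> UNIV"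
        have "norm (f s a - f s b - blinfun_apply 0 (a - b)) \<le> M * norm (a - b)"
          by (rule H2[where f'="f' s" and S="cball x 1"]) (use s a b f_deriv Mb in auto)
        then show "dist (f s a) (f s b) \<le> M * dist a b" by (simp add: dist_norm)
      qed (rule M0)
    qed
  qed
  have part2: "(let Phi = Phi_op Q2 B (blinfun_apply (f' t x));
           Psi = (\<lambda>s xs1 xs2 xp1 xp2. Q2 (f s (xs1 + xs2 + xp1 + xp2)) - B xp2)
       in \<exists>\<delta>0>0. \<exists>\<epsilon>0>0. \<exists>c :: real \<Rightarrow> real \<Rightarrow> real \<Rightarrow> real \<Rightarrow> real \<Rightarrow> real.
          (\<forall>d1 d2 d3 d4 e. 0 < d1 \<and> d1 \<le> \<delta>0 \<and> 0 < d2 \<and> d2 \<le> \<delta>0 \<and> 0 < d3 \<and> d3 \<le> \<delta>0 \<and>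
               0 < d4 \<and> d4 \<le> \<delta>0 \<and> 0 < e \<and> e \<le> \<epsilon>0 \<longrightarrow>
             (\<forall>s xs1 xs2 xp1 y1 y2.
                s \<in> {tp..} \<inter> cball t d1 \<and>
                xs1 \<in> range S1 \<inter> cball (S1 x) d2 \<and>
                xs2 \<in> Ds2 \<inter> cball (S2 x) d3 \<and>
                xp1 \<in> range P1 \<inter> cball (P1 x) d4 \<and>
                y1 \<in> range P2 \<inter> cball (P2 x) e \<and>
                y2 \<in> range P2 \<inter> cball (P2 x) e \<longrightarrow>
                norm (Psi s xs1 xs2 xp1 y1 - Psi s xs1 xs2 xp1 y2 - Phi (y1 - y2))
                  \<le> c d1 d2 d3 d4 e * norm (y1 - y2))) \<and>
          (\<exists>L. ((\<lambda>(d1, d2, d3, d4, e). c d1 d2 d3 d4 e) \<longlongrightarrow> L)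
                 (at_right 0 \<times>\<^sub>F (at_right 0 \<times>\<^sub>F (at_right 0 \<times>\<^sub>F (at_right 0 \<times>\<^sub>F at_right 0)))) \<and>
               L * opnorm_on (range Q2) (the_inv_into (range P2) Phi) < 1))"
    if Lx: "(t, x) \<in> L_set tp B F2 Q2 f" and "S2 x \<in> Ds2" for t x
  proof -
    have t: "tp \<le> t" using Lx by (simp add: L_set_def)
    define D where "D = f' t x"
    define Sx where "Sx d1 r = (\<lambda>p. norm ((case p of (s, z) \<Rightarrow> f' s z) - D)) ` (({tp..} \<inter> cball t d1) \<times> cball x r)" for d1 r
    define c where "c d1 d2 d3 d4 e = onorm Q2 * Sup (Sx d1 (d2 + d3 + d4 + e))" for d1 d2 d3 d4 e
    have bdd: "bdd_above (Sx d1 r)" for d1 r unfolding Sx_def by (rule H1[OF fcont2])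
    have Mb: "norm (f' s z - D) \<le> Sup (Sx d1 r)" if "s \<in> {tp..} \<inter> cball t d1" "z \<in> cball x r" for s z d1 r
      by (rule cSup_upper[OF _ bdd]) (use that in \<open>force simp: Sx_def\<close>)
    have oQ: "0 \<le> onorm Q2" by (rule onorm_pos_le[OF blQ2])
    have bound: "norm (Q2 (f s (xs1 + xs2 + xp1 + y1)) - B y1 - (Q2 (f s (xs1 + xs2 + xp1 + y2)) - B y2)
          - Phi_op Q2 B (blinfun_apply D) (y1 - y2)) \<le> c d1 d2 d3 d4 e * norm (y1 - y2)"
      if s: "s \<in> {tp..} \<inter> cball t d1" and h1: "xs1 \<in> cball (S1 x) d2" and h2: "xs2 \<in> cball (S2 x) d3"
        and h3: "xp1 \<in> cball (P1 x) d4" and h4: "y1 \<in> cball (P2 x) e" and h5: "y2 \<in> cball (P2 x) e"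
      for d1 d2 d3 d4 e s xs1 xs2 xp1 y1 y2
    proof -
      define r where "r = d2 + d3 + d4 + e"
      define a where "a = xs1 + xs2 + xp1 + y1"
      define b where "b = xs1 + xs2 + xp1 + y2"
      have inb: "xs1 + xs2 + xp1 + y \<in> cball x r" if "y \<in> cball (P2 x) e" for y
      proof -
        have "x - (xs1 + xs2 + xp1 + y) = (S1 x - xs1) + (S2 x - xs2) + (P1 x - xp1) + (P2 x - y)"
          using xdec[of x] by (simp add: algebra_simps)
        then have "norm (x - (xs1 + xs2 + xp1 + y)) \<le> norm (S1 x - xs1) + norm (S2 x - xs2) + norm (P1 x - xp1) + norm (P2 x - y)"
          using norm4 by metis
        with h1 h2 h3 that show ?thesis by (simp add: r_def dist_norm mem_cball)
      qed
      have "norm (f s a - f s b - blinfun_apply D (a - b)) \<le> Sup (Sx d1 r) * norm (a - b)"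
        by (rule H2[where f'="f' s" and S="cball x r"]) (use s f_deriv Mb inb h4 h5 in \<open>auto simp: a_def b_def\<close>)
      then have n1: "norm (f s a - f s b - blinfun_apply D (y1 - y2)) \<le> Sup (Sx d1 r) * norm (y1 - y2)"
        by (simp add: a_def b_def)
      have eq: "Q2 (f s a) - B y1 - (Q2 (f s b) - B y2) - Phi_op Q2 B (blinfun_apply D) (y1 - y2)
          = Q2 (f s a - f s b - blinfun_apply D (y1 - y2))"
        by (simp add: Phi_op_def linear_diff[OF linQ2] linear_diff[OF linB] linear_add[OF linQ2] algebra_simps)
      have "norm (Q2 (f s a - f s b - blinfun_apply D (y1 - y2))) \<le> onorm Q2 * norm (f s a - f s b - blinfun_apply D (y1 - y2))"
        by (rule onorm[OF blQ2])
      also have "\<dots> \<le> onorm Q2 * (Sup (Sx d1 r) * norm (y1 - y2))"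
        by (rule mult_left_mono[OF n1 oQ])
      finally show ?thesis using eq by (simp add: a_def b_def c_def r_def mult.assoc)
    qed
    have lim: "((\<lambda>(d1, d2, d3, d4, e). c d1 d2 d3 d4 e) \<longlongrightarrow> 0)
                 (at_right 0 \<times>\<^sub>F (at_right 0 \<times>\<^sub>F (at_right 0 \<times>\<^sub>F (at_right 0 \<times>\<^sub>F at_right 0))))"
    proof (rule tendstoI)
      fix \<epsilon> :: real assume \<epsilon>: "0 < \<epsilon>"
      define e' where "e' = \<epsilon> / (2 * (onorm Q2 + 1))"
      have e': "0 < e'" using \<epsilon> oQ by (simp add: e'_def)
      have tin: "(t, x) \<in> {tp..} \<times> UNIV" using t by simp
      from f'_cont[unfolded continuous_on_iff, rule_format, OF tin e']
      obtain \<eta> where \<eta>: "\<eta> > 0" and \<eta>c: "\<And>p. p \<in> {tp..} \<times> UNIV \<Longrightarrow> dist p (t, x) < \<eta> \<Longrightarrow>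
          dist ((case p of (s, z) \<Rightarrow> f' s z)) (f' t x) < e'"
        by fastforce
      define P where "P d = (0 < d \<and> d < \<eta> / 8)" for d :: real
      have ev: "eventually P (at_right 0)"
        unfolding P_def eventually_at_right_field using \<eta> by (intro exI[of _ "\<eta>/8"]) auto
      have ev5: "eventually (\<lambda>p. P (fst p) \<and> (P (fst (snd p)) \<and> (P (fst (snd (snd p))) \<and>
           (P (fst (snd (snd (snd p)))) \<and> P (snd (snd (snd (snd p))))))))
           (at_right 0 \<times>\<^sub>F (at_right 0 \<times>\<^sub>F (at_right 0 \<times>\<^sub>F (at_right 0 \<times>\<^sub>F at_right 0))))"
        by (intro eventually_prodI ev)
      show "eventually (\<lambda>p. dist ((\<lambda>(d1, d2, d3, d4, e). c d1 d2 d3 d4 e) p) 0 < \<epsilon>)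
          (at_right 0 \<times>\<^sub>F (at_right 0 \<times>\<^sub>F (at_right 0 \<times>\<^sub>F (at_right 0 \<times>\<^sub>F at_right 0))))"
      proof (rule eventually_mono[OF ev5])
        fix p :: "real \<times> real \<times> real \<times> real \<times> real"
        obtain d1 d2 d3 d4 e where p: "p = (d1, d2, d3, d4, e)" by (cases p) auto
        assume "P (fst p) \<and> P (fst (snd p)) \<and> P (fst (snd (snd p))) \<and> P (fst (snd (snd (snd p)))) \<and> P (snd (snd (snd (snd p))))"
        then have d: "0 < d1" "d1 < \<eta>/8" "0 < d2" "d2 < \<eta>/8" "0 < d3" "d3 < \<eta>/8" "0 < d4" "d4 < \<eta>/8" "0 < e" "e < \<eta>/8"
          by (auto simp: p P_def)
        define r where "r = d2 + d3 + d4 + e"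
        have ne: "Sx d1 r \<noteq> {}" unfolding Sx_def using t d by (auto simp: r_def)
        have le: "Sup (Sx d1 r) \<le> e'"
        proof (rule cSup_least[OF ne])
          fix v assume "v \<in> Sx d1 r"
          then obtain s z where sz: "s \<in> {tp..} \<inter> cball t d1" "z \<in> cball x r" and v: "v = norm (f' s z - D)"
            unfolding Sx_def by auto
          have "dist (s, z) (t, x) \<le> dist s t + dist z x" by (rule dist_pair_le)
          also have "\<dots> < \<eta>" using sz d by (simp add: dist_commute mem_cball r_def)
          finally have "dist (f' s z) (f' t x) < e'" using \<eta>c[of "(s, z)"] sz by auto
          then show "v \<le> e'" by (simp add: v D_def dist_norm)
        qed
        have ge: "0 \<le> Sup (Sx d1 r)"
          using Mb[of t d1 x r] t d by (auto simp: r_def intro: order_trans[OF norm_ge_zero])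
        have c0: "0 \<le> c d1 d2 d3 d4 e" using ge oQ by (simp add: c_def r_def)
        have "c d1 d2 d3 d4 e \<le> onorm Q2 * e'"
          unfolding c_def r_def[symmetric] by (rule mult_left_mono[OF le oQ])
        also have "\<dots> \<le> (onorm Q2 + 1) * e'" using e' by (simp add: algebra_simps)
        also have "\<dots> = \<epsilon> / 2" using oQ by (simp add: e'_def field_simps)
        also have "\<dots> < \<epsilon>" using \<epsilon> by simp
        finally show "dist ((\<lambda>(d1, d2, d3, d4, e). c d1 d2 d3 d4 e) p) 0 < \<epsilon>"
          using c0 by (simp add: p)
      qed
    qed
    show ?thesis
      unfolding Let_def D_def[symmetric]
      apply (rule exI[of _ "1::real"], rule conjI[OF zero_less_one])
      apply (rule exI[of _ "1::real"], rule conjI[OF zero_less_one])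
      apply (rule exI[of _ c], rule conjI)
      subgoal using bound by blast
      apply (rule exI[of _ "0::real"])
      using lim by simp
  qed
  show ?thesis using part1 part2 by blast
qed

end
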